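(* Let $k\ge1$ and $0\le s\le k$. The determinant of the Gram matrix $G^k_s$ (defined in the context) is a nonzero polynomial in $\mathbb{Z}[x]$ with leading coefficient $1$.
   Context: Partition diagrams: for $k\ge1$ let $[k]=\{1,\dots,k\}$, $[k']=\{1',\dots,k'\}$; a $k$-partition diagram is a set partition of $[k]\cup[k']$ (vertices $1,\dots,k$ in a top row, $1',\dots,k'$ in a bottom row). A block meeting both $[k]$ and $[k']$ is a through class; other blocks are horizontal edges. The propagating number $\sharp^p(d)$ is the number of through classes of $d$. The product of diagrams $d_1,d_2$: place $d_1$ above $d_2$, identify the bottom vertices of $d_1$ with the top vertices of $d_2$ (forming a middle row), take the partition of the top row of $d_1$ and bottom row of $d_2$ induced by connectivity, giving a diagram $d_3$; let $l(d_1,d_2)$ be the number of connected components lying entirely in the middle row. Then $d_1\circ d_2=x^{l(d_1,d_2)}d_3$, and $\sharp^p(d_1 d_2)$ means $\sharp^p(d_3)$. Index set: $J^k_s$ is the set of pairs $D=(\pi,T)$ where $\pi$ is a set partition of $[k]$ and $T$ is a set of $s$ blocks of $\pi$. To $D$ associate the diagram $d_D$ whose blocks are $B\cup B'$ for $B\in T$, and $B$, $B'$ separately for $B\in\pi\setminus T$ (here $B'=\{i':i\in B\}$). Gram matrix: $G^k_s$ is the square matrix with rows and columns indexed by $J^k_s$ whose $(D,E)$ entry is $x^{l(d_D,d_E)}$ if $\sharp^p(d_D d_E)=s$ and $0$ otherwise. *)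

theory Defs
  imports "HOL-Library.Disjoint_Sets" "HOL-Combinatorics.Permutations"
          "HOL-Computational_Algebra.Polynomial"
begin

text \<open>Vertices are pairs (row, position).  In a k-partition diagram the top
  vertex i is (0,i) and the bottom vertex i' is (1,i), for i in {1..k}.\<close>

definition row :: "nat \<Rightarrow> nat \<Rightarrow> (nat \<times> nat) set" where
  "row r k = {(r, i) | i. i \<in> {1..k}}"

definition diag_verts :: "nat \<Rightarrow> (nat \<times> nat) set" where
  "diag_verts k = row 0 k \<union> row 1 k"

definition is_diagram :: "nat \<Rightarrow> (nat \<times> nat) set set \<Rightarrow> bool" where
  "is_diagram k d \<longleftrightarrow> partition_on (diag_verts k) d"

definition prop_num :: "nat \<Rightarrow> (nat \<times> nat) set set \<Rightarrow> nat" where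
  "prop_num k d = card {B \<in> d. B \<inter> row 0 k \<noteq> {} \<and> B \<inter> row 1 k \<noteq> {}}"

text \<open>Stacking: d1 occupies rows 0 (top) and 1 (middle); d2 is shifted down so that
  it occupies rows 1 (middle) and 2 (bottom).\<close>
definition shift_down :: "nat \<times> nat \<Rightarrow> nat \<times> nat" where
  "shift_down v = (fst v + 1, snd v)"

definition stack_rel :: "(nat \<times> nat) set set \<Rightarrow> (nat \<times> nat) set set \<Rightarrow> ((nat \<times> nat) \<times> (nat \<times> nat)) set" where
  "stack_rel d1 d2 = {(u, v). (\<exists>B\<in>d1. u \<in> B \<and> v \<in> B) \<or>
                             (\<exists>B\<in>d2. u \<in> shift_down ` B \<and> v \<in> shift_down ` B)}"

definition stack_comps :: "nat \<Rightarrow> (nat \<times> nat) set set \<Rightarrow> (nat \<times> nat) set set \<Rightarrow> (nat \<times> nat) set set" where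
  "stack_comps k d1 d2 = (row 0 k \<union> row 1 k \<union> row 2 k) // ((stack_rel d1 d2)\<^sup>+)"

definition lift_up :: "nat \<times> nat \<Rightarrow> nat \<times> nat" where
  "lift_up v = (if fst v = 2 then (1, snd v) else v)"

definition diag_prod :: "nat \<Rightarrow> (nat \<times> nat) set set \<Rightarrow> (nat \<times> nat) set set \<Rightarrow> (nat \<times> nat) set set" where
  "diag_prod k d1 d2 = {lift_up ` (C - row 1 k) | C. C \<in> stack_comps k d1 d2 \<and> \<not> C \<subseteq> row 1 k}"

definition loops :: "nat \<Rightarrow> (nat \<times> nat) set set \<Rightarrow> (nat \<times> nat) set set \<Rightarrow> nat" where
  "loops k d1 d2 = card {C \<in> stack_comps k d1 d2. C \<subseteq> row 1 k}"

definition J_set :: "nat \<Rightarrow> nat \<Rightarrow> (nat set set \<times> nat set set) set" where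
  "J_set k s = {(\<pi>, T). partition_on {1..k} \<pi> \<and> T \<subseteq> \<pi> \<and> card T = s}"

definition top_of :: "nat set \<Rightarrow> (nat \<times> nat) set" where
  "top_of B = (\<lambda>i. (0, i)) ` B"

definition bot_of :: "nat set \<Rightarrow> (nat \<times> nat) set" where
  "bot_of B = (\<lambda>i. (1, i)) ` B"

definition diag_of :: "nat set set \<times> nat set set \<Rightarrow> (nat \<times> nat) set set" where
  "diag_of D = (case D of (\<pi>, T) \<Rightarrow>
     {top_of B \<union> bot_of B | B. B \<in> T} \<union> {top_of B | B. B \<in> \<pi> - T} \<union> {bot_of B | B. B \<in> \<pi> - T})"

definition gram :: "nat \<Rightarrow> nat \<Rightarrow> nat set set \<times> nat set set \<Rightarrow> nat set set \<times> nat set set \<Rightarrow> int poly" where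
  "gram k s D E =
     (if prop_num k (diag_prod k (diag_of D) (diag_of E)) = s
      then [:0, 1:] ^ loops k (diag_of D) (diag_of E) else 0)"

definition det_on :: "'i set \<Rightarrow> ('i \<Rightarrow> 'i \<Rightarrow> 'a :: comm_ring_1) \<Rightarrow> 'a" where
  "det_on I M = (\<Sum>p \<in> {p. p permutes I}. of_int (sign p) * (\<Prod>i\<in>I. M i (p i)))"

definition gram_det :: "nat \<Rightarrow> nat \<Rightarrow> int poly" where
  "gram_det k s = det_on (J_set k s) (gram k s)"

end

theory Submission
  imports Defs
begin


lemma xpow: "([:0,1:] :: int poly) ^ n = monom 1 n"
  by (simp add: monom_altdef)

lemma det_lead:
  fixes M :: "'i \<Rightarrow> 'i \<Rightarrow> int poly" and w :: "'i \<Rightarrow> nat"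
  assumes fin: "finite I"
    and diag: "\<And>i. i \<in> I \<Longrightarrow> M i i = [:0,1:] ^ w i"
    and off: "\<And>i j. i \<in> I \<Longrightarrow> j \<in> I \<Longrightarrow> i \<noteq> j \<Longrightarrow> M i j \<noteq> 0 \<Longrightarrow>
                 \<exists>l. M i j = [:0,1:] ^ l \<and> 2 * l < w i + w j"
  shows "det_on I M \<noteq> 0 \<and> lead_coeff (det_on I M) = 1"
proof -
  define m where "m = (\<Sum>i\<in>I. w i)"
  define t where "t p = (of_int (sign p) * (\<Prod>i\<in>I. M i (p i)) :: int poly)" for p :: "'i \<Rightarrow> 'i"
  have P: "finite {p. p permutes I}" using fin by (rule finite_permutations)
  have idin: "id \<in> {p. p permutes I}" by (simp add: permutes_id)
  have tid: "t id = monom 1 m"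
  proof -
    have "t id = (\<Prod>i\<in>I. [:0,1:] ^ w i)" unfolding t_def using diag by (simp add: sign_id)
    also have "\<dots> = [:0,1:] ^ m" unfolding m_def by (simp add: power_sum)
    finally show ?thesis by (simp add: xpow)
  qed
  have small: "coeff (t p) n = 0" if pp: "p permutes I" and pid: "p \<noteq> id" and n: "m \<le> n" for p n
  proof (cases "\<exists>i\<in>I. M i (p i) = 0")
    case True
    then have "(\<Prod>i\<in>I. M i (p i)) = 0" using fin by (simp add: prod_zero)
    then show ?thesis unfolding t_def by simp
  next
    case False
    have "\<forall>i\<in>I. \<exists>l. M i (p i) = [:0,1:] ^ l \<and> 2 * l \<le> w i + w (p i) \<and> (p i \<noteq> i \<longrightarrow> 2 * l < w i + w (p i))"
    proof
      fix i assume i: "i \<in> I"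
      have pi: "p i \<in> I" using pp i by (simp add: permutes_in_image)
      show "\<exists>l. M i (p i) = [:0,1:] ^ l \<and> 2 * l \<le> w i + w (p i) \<and> (p i \<noteq> i \<longrightarrow> 2 * l < w i + w (p i))"
      proof (cases "p i = i")
        case True then show ?thesis using diag[OF i] by auto
      next
        case ne: False
        from off[OF i pi] ne False i obtain l where "M i (p i) = [:0,1:] ^ l" "2 * l < w i + w (p i)"
          by (metis)
        then show ?thesis using ne by auto
      qed
    qed
    then obtain L where L: "\<And>i. i \<in> I \<Longrightarrow> M i (p i) = [:0,1:] ^ L i \<and> 2 * L i \<le> w i + w (p i) \<and> (p i \<noteq> i \<longrightarrow> 2 * L i < w i + w (p i))"
      by metis
    have "\<exists>i\<in>I. p i \<noteq> i"
    proof (rule ccontr)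
      assume "\<not> ?thesis"
      then have "\<forall>x. p x = x" using pp unfolding permutes_def by metis
      then show False using pid by auto
    qed
    then obtain i0 where i0: "i0 \<in> I" "p i0 \<noteq> i0" by blast
    have "(\<Sum>i\<in>I. 2 * L i) < (\<Sum>i\<in>I. w i + w (p i))"
      by (rule sum_strict_mono_ex1[OF fin]) (use L i0 in auto)
    also have "\<dots> = m + (\<Sum>i\<in>I. w (p i))" unfolding m_def by (simp add: sum.distrib)
    also have "(\<Sum>i\<in>I. w (p i)) = m" unfolding m_def using sum.permute[OF pp, of w] by (simp add: comp_def)
    finally have "(\<Sum>i\<in>I. 2 * L i) < 2 * m" by simp
    moreover have "(\<Sum>i\<in>I. 2 * L i) = 2 * (\<Sum>i\<in>I. L i)" by (simp add: sum_distrib_left)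
    ultimately have lt: "(\<Sum>i\<in>I. L i) < m" by linarith
    have "(\<Prod>i\<in>I. M i (p i)) = (\<Prod>i\<in>I. [:0,1:] ^ L i)" by (rule prod.cong) (use L in auto)
    also have "\<dots> = [:0,1:] ^ (\<Sum>i\<in>I. L i)" by (simp only: power_sum)
    also have "\<dots> = monom 1 (\<Sum>i\<in>I. L i)" by (rule xpow)
    finally have "t p = of_int (sign p) * monom 1 (\<Sum>i\<in>I. L i)" unfolding t_def by simp
    also have "\<dots> = monom (of_int (sign p)) (\<Sum>i\<in>I. L i)"
      by (simp only: of_int_monom mult_monom) simp
    finally show ?thesis using lt n by (simp add: coeff_monom)
  qed
  have det: "det_on I M = t id + (\<Sum>p\<in>{p. p permutes I} - {id}. t p)"
    proof -
    have "det_on I M = sum t {p. p permutes I}" unfolding det_on_def t_def by simp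
    also have "\<dots> = t id + sum t ({p. p permutes I} - {id})" by (rule sum.remove[OF P idin])
    finally show ?thesis .
  qed
  have cz: "coeff (\<Sum>p\<in>{p. p permutes I} - {id}. t p) n = 0" if "m \<le> n" for n
    using small that by (simp add: coeff_sum)
  have c1: "coeff (det_on I M) m = 1" using cz[of m] det tid by simp
  have c0: "coeff (det_on I M) n = 0" if "m < n" for n using cz[of n] det tid that by (simp add: coeff_monom)
  have dg: "degree (det_on I M) = m"
    by (rule antisym[OF degree_le le_degree]) (use c0 c1 in auto)
  show ?thesis using c1 dg by auto
qed


lemma row_iff[simp]: "(a, i) \<in> row r k \<longleftrightarrow> a = r \<and> 1 \<le> i \<and> i \<le> k"
  by (auto simp: row_def)

lemma part_ex: "partition_on A P \<Longrightarrow> i \<in> A \<Longrightarrow> \<exists>B\<in>P. i \<in> B"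
  by (auto simp: partition_on_def)
lemma part_uniq: "partition_on A P \<Longrightarrow> B \<in> P \<Longrightarrow> B' \<in> P \<Longrightarrow> i \<in> B \<Longrightarrow> i \<in> B' \<Longrightarrow> B = B'"
  unfolding partition_on_def disjoint_def by blast
lemma part_sub: "partition_on A P \<Longrightarrow> B \<in> P \<Longrightarrow> B \<subseteq> A"
  by (auto simp: partition_on_def)
lemma part_Min: "partition_on {1..(k::nat)} P \<Longrightarrow> B \<in> P \<Longrightarrow> Min B \<in> B"
proof -
  assume a: "partition_on {1..k} P" "B \<in> P"
  then have "B \<noteq> {}" "B \<subseteq> {1..k}" by (auto simp: partition_on_def)
  then show ?thesis using finite_subset[of B "{1..k}"] by (intro Min_in) auto
qed
lemma part_Min_k: "partition_on {1..(k::nat)} P \<Longrightarrow> B \<in> P \<Longrightarrow> Min B \<in> {1..k}"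
  using part_Min part_sub by blast
lemma part_fin: "partition_on {1..(k::nat)} P \<Longrightarrow> finite P"
proof -
  assume "partition_on {1..k} P"
  then have "P \<subseteq> Pow {1..k}" by (auto simp: partition_on_def)
  then show ?thesis by (rule finite_subset) simp
qed

locale twoD =
  fixes k :: nat and P1 T1 P2 T2 :: "nat set set"
  assumes p1: "partition_on {1..k} P1" and t1: "T1 \<subseteq> P1"
    and p2: "partition_on {1..k} P2" and t2: "T2 \<subseteq> P2"
begin

definition R where "R = stack_rel (diag_of (P1,T1)) (diag_of (P2,T2))"
definition V where "V = row 0 k \<union> row 1 k \<union> row 2 k"

lemma R_I1: "X \<in> diag_of (P1,T1) \<Longrightarrow> u \<in> X \<Longrightarrow> v \<in> X \<Longrightarrow> (u,v) \<in> R"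
  unfolding R_def stack_rel_def by blast

lemma R_I2: "X \<in> diag_of (P2,T2) \<Longrightarrow> u \<in> shift_down ` X \<Longrightarrow> v \<in> shift_down ` X \<Longrightarrow> (u,v) \<in> R"
  unfolding R_def stack_rel_def by (simp only: mem_Collect_eq case_prod_conv) blast

lemma R_iff: "(((r,i),(r',j)) \<in> R) \<longleftrightarrow>
   (r \<le> 1 \<and> r' \<le> 1 \<and> (\<exists>B\<in>P1. i \<in> B \<and> j \<in> B \<and> (r = r' \<or> B \<in> T1))) \<or>
   (1 \<le> r \<and> r \<le> 2 \<and> 1 \<le> r' \<and> r' \<le> 2 \<and> (\<exists>B\<in>P2. i \<in> B \<and> j \<in> B \<and> (r = r' \<or> B \<in> T2)))"
proof
  assume "((r,i),(r',j)) \<in> R"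
  then show "(r \<le> 1 \<and> r' \<le> 1 \<and> (\<exists>B\<in>P1. i \<in> B \<and> j \<in> B \<and> (r = r' \<or> B \<in> T1))) \<or>
   (1 \<le> r \<and> r \<le> 2 \<and> 1 \<le> r' \<and> r' \<le> 2 \<and> (\<exists>B\<in>P2. i \<in> B \<and> j \<in> B \<and> (r = r' \<or> B \<in> T2)))"
  proof -
    from \<open>((r,i),(r',j)) \<in> R\<close> consider
        (a) X where "X \<in> diag_of (P1,T1)" "(r,i) \<in> X" "(r',j) \<in> X"
      | (b) X where "X \<in> diag_of (P2,T2)" "(r,i) \<in> shift_down ` X" "(r',j) \<in> shift_down ` X"
      unfolding R_def stack_rel_def by blast
    then show ?thesis
    proof cases
      case a
      from a(1) consider (t) B where "B \<in> T1" "X = top_of B \<union> bot_of B"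
        | (u) B where "B \<in> P1 - T1" "X = top_of B" | (v) B where "B \<in> P1 - T1" "X = bot_of B"
        unfolding diag_of_def by blast
      then show ?thesis
      proof cases
        case t then show ?thesis using a t1 unfolding top_of_def bot_of_def by blast
      next
        case u then show ?thesis using a t1 unfolding top_of_def bot_of_def by blast
      next
        case v then show ?thesis using a t1 unfolding top_of_def bot_of_def by blast
      qed
    next
      case b
      from b(1) consider (t) B where "B \<in> T2" "X = top_of B \<union> bot_of B"
        | (u) B where "B \<in> P2 - T2" "X = top_of B" | (v) B where "B \<in> P2 - T2" "X = bot_of B"
        unfolding diag_of_def by blast
      then show ?thesis
      proof cases
        case t then show ?thesis using b t2 unfolding top_of_def bot_of_def shift_down_def by force
      next
        case u then show ?thesis using b t2 unfolding top_of_def bot_of_def shift_down_def by force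
      next
        case v then show ?thesis using b t2 unfolding top_of_def bot_of_def shift_down_def by force
      qed
    qed
  qed
next
  assume "(r \<le> 1 \<and> r' \<le> 1 \<and> (\<exists>B\<in>P1. i \<in> B \<and> j \<in> B \<and> (r = r' \<or> B \<in> T1))) \<or>
   (1 \<le> r \<and> r \<le> 2 \<and> 1 \<le> r' \<and> r' \<le> 2 \<and> (\<exists>B\<in>P2. i \<in> B \<and> j \<in> B \<and> (r = r' \<or> B \<in> T2)))"
  then show "((r,i),(r',j)) \<in> R"
  proof
    assume "r \<le> 1 \<and> r' \<le> 1 \<and> (\<exists>B\<in>P1. i \<in> B \<and> j \<in> B \<and> (r = r' \<or> B \<in> T1))"
    then obtain B where B: "B \<in> P1" "i \<in> B" "j \<in> B" "r = r' \<or> B \<in> T1" and r: "r \<le> 1" "r' \<le> 1" by blast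
    show ?thesis
    proof (cases "B \<in> T1")
      case True
      let ?X = "top_of B \<union> bot_of B"
      have "?X \<in> diag_of (P1,T1)" unfolding diag_of_def using True by blast
      moreover have "(r,i) \<in> ?X" "(r',j) \<in> ?X" using B r unfolding top_of_def bot_of_def
        by (auto simp: le_Suc_eq)
      ultimately show ?thesis by (rule R_I1)
    next
      case False
      then have rr: "r = r'" using B by auto
      show ?thesis
      proof (cases "r = 0")
        case True
        have "top_of B \<in> diag_of (P1,T1)" unfolding diag_of_def using False B by blast
        moreover have "(r,i) \<in> top_of B" "(r',j) \<in> top_of B" using B True rr unfolding top_of_def by auto
        ultimately show ?thesis by (rule R_I1)
      next
        case f: False
        have "bot_of B \<in> diag_of (P1,T1)" unfolding diag_of_def using False B by blast
        moreover have "(r,i) \<in> bot_of B" "(r',j) \<in> bot_of B" using B f rr r unfolding bot_of_def by auto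
        ultimately show ?thesis by (rule R_I1)
      qed
    qed
  next
    assume "1 \<le> r \<and> r \<le> 2 \<and> 1 \<le> r' \<and> r' \<le> 2 \<and> (\<exists>B\<in>P2. i \<in> B \<and> j \<in> B \<and> (r = r' \<or> B \<in> T2))"
    then obtain B where B: "B \<in> P2" "i \<in> B" "j \<in> B" "r = r' \<or> B \<in> T2" and r: "1 \<le> r" "r \<le> 2" "1 \<le> r'" "r' \<le> 2" by blast
    have sd: "(a, x) \<in> shift_down ` S \<longleftrightarrow> 1 \<le> a \<and> (a - 1, x) \<in> S" for a x S
      unfolding shift_down_def by (force simp: image_iff)
    show ?thesis
    proof (cases "B \<in> T2")
      case True
      let ?X = "top_of B \<union> bot_of B"
      have rr: "r = 1 \<or> r = 2" "r' = 1 \<or> r' = 2" using r by auto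
      have "?X \<in> diag_of (P2,T2)" unfolding diag_of_def using True by blast
      moreover have "(r,i) \<in> shift_down ` ?X"
      proof (rule rev_image_eqI)
        show "(r-1,i) \<in> ?X" using rr(1) B(2) by (elim disjE) (simp_all add: top_of_def bot_of_def)
        show "(r,i) = shift_down (r-1,i)" using r by (simp add: shift_down_def)
      qed
      moreover have "(r',j) \<in> shift_down ` ?X"
      proof (rule rev_image_eqI)
        show "(r'-1,j) \<in> ?X" using rr(2) B(3) by (elim disjE) (simp_all add: top_of_def bot_of_def)
        show "(r',j) = shift_down (r'-1,j)" using r by (simp add: shift_down_def)
      qed
      ultimately show ?thesis by (rule R_I2)
    next
      case False
      then have rr: "r = r'" using B by auto
      show ?thesis
      proof (cases "r = 1")
        case True
        have "top_of B \<in> diag_of (P2,T2)" unfolding diag_of_def using False B by blast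
        moreover have "(r,i) \<in> shift_down ` top_of B"
          using B True rr unfolding top_of_def shift_down_def by (auto intro!: rev_image_eqI[of "(0,i)"])
        moreover have "(r',j) \<in> shift_down ` top_of B"
          using B True rr unfolding top_of_def shift_down_def by (auto intro!: rev_image_eqI[of "(0,j)"])
        ultimately show ?thesis by (rule R_I2)
      next
        case f: False
        have r2: "r = 2" "r' = 2" using f r rr by auto
        have "bot_of B \<in> diag_of (P2,T2)" unfolding diag_of_def using False B by blast
        moreover have "(r,i) \<in> shift_down ` bot_of B"
          using B r2 unfolding bot_of_def shift_down_def by (auto intro!: rev_image_eqI[of "(1,i)"])
        moreover have "(r',j) \<in> shift_down ` bot_of B"
          using B r2 unfolding bot_of_def shift_down_def by (auto intro!: rev_image_eqI[of "(1,j)"])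
        ultimately show ?thesis by (rule R_I2)
      qed
    qed
  qed
qed

lemma mem1: "B \<in> P1 \<Longrightarrow> i \<in> B \<Longrightarrow> 1 \<le> i \<and> i \<le> k"
  using part_sub[OF p1] by fastforce
lemma mem2: "B \<in> P2 \<Longrightarrow> i \<in> B \<Longrightarrow> 1 \<le> i \<and> i \<le> k"
  using part_sub[OF p2] by fastforce

lemma Vmem: "(r,i) \<in> V \<longleftrightarrow> r \<le> 2 \<and> i \<in> {1..k}"
  by (auto simp: V_def)

lemma R_V: assumes "(u,v) \<in> R" shows "u \<in> V \<and> v \<in> V"
proof -
  obtain r i where u: "u = (r,i)" by (cases u)
  obtain r' j where v: "v = (r',j)" by (cases v)
  from assms[unfolded u v R_iff] show ?thesis unfolding u v Vmem
    using mem1 mem2 by (auto simp del: One_nat_def)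
qed

lemma R_refl: assumes "u \<in> V" shows "(u,u) \<in> R"
proof -
  obtain r i where u: "u = (r,i)" by (cases u)
  have r: "r \<le> 2" and i: "i \<in> {1..k}" using assms u Vmem by auto
  obtain B1 where "B1 \<in> P1" "i \<in> B1" using part_ex[OF p1 i] by blast
  moreover obtain B2 where "B2 \<in> P2" "i \<in> B2" using part_ex[OF p2 i] by blast
  ultimately show ?thesis unfolding u R_iff using r by auto
qed

lemma R_sym: "(u,v) \<in> R \<Longrightarrow> (v,u) \<in> R"
proof -
  assume a: "(u,v) \<in> R"
  obtain r i where u: "u = (r,i)" by (cases u)
  obtain r' j where v: "v = (r',j)" by (cases v)
  from a show ?thesis unfolding u v R_iff by blast
qed

lemma equivR: "equiv V (R\<^sup>+)"
proof (rule equivI)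
  show "R\<^sup>+ \<subseteq> V \<times> V" by (rule trancl_subset_Sigma) (use R_V in auto)
  show "refl_on V (R\<^sup>+)" unfolding refl_on_def using R_refl by blast
  show "sym (R\<^sup>+)" by (rule sym_trancl) (use R_sym in \<open>auto simp: sym_def\<close>)
  show "trans (R\<^sup>+)" by (rule trans_trancl)
qed

definition comps where "comps = V // R\<^sup>+"
definition cls where "cls u = R\<^sup>+ `` {u}"

lemma C_eq: assumes "C \<in> comps" "u \<in> C" shows "C = cls u"
proof -
  from assms(1) obtain x where x: "C = R\<^sup>+ `` {x}" "x \<in> V" unfolding comps_def by (rule quotientE)
  then have "(x,u) \<in> R\<^sup>+" using assms(2) by auto
  then show ?thesis unfolding x cls_def by (rule equiv_class_eq[OF equivR])
qed

lemma cls_comps: "u \<in> V \<Longrightarrow> cls u \<in> comps"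
  unfolding cls_def comps_def by (rule quotientI)

lemma cls_self: "u \<in> V \<Longrightarrow> u \<in> cls u"
  unfolding cls_def by (rule equiv_class_self[OF equivR])

lemma comp_closed: "C \<in> comps \<Longrightarrow> u \<in> C \<Longrightarrow> (u,v) \<in> R \<Longrightarrow> v \<in> C"
  unfolding comps_def by (rule in_quotient_imp_closed[OF equivR]) auto

lemma comp_sub: "C \<in> comps \<Longrightarrow> C \<subseteq> V"
  unfolding comps_def by (rule in_quotient_imp_subset[OF equivR])

lemma comp_ne: "C \<in> comps \<Longrightarrow> C \<noteq> {}"
  unfolding comps_def by (rule in_quotient_imp_non_empty[OF equivR])

lemma closed_sub:
  assumes cl: "\<And>u v. (u,v) \<in> R \<Longrightarrow> u \<in> X \<Longrightarrow> v \<in> X" and C: "C \<in> comps" "u \<in> C" "u \<in> X"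
  shows "C \<subseteq> X"
proof
  fix v assume "v \<in> C"
  then have "(u,v) \<in> R\<^sup>+" using C_eq[OF C(1,2)] unfolding cls_def by auto
  then show "v \<in> X"
    by (induction rule: trancl_induct) (use cl C(3) in blast)+
qed

lemma fin1: "finite P1" using part_fin[OF p1] .
lemma fin2: "finite P2" using part_fin[OF p2] .

lemma Min1: "B \<in> P1 \<Longrightarrow> (r, Min B) \<in> V \<longleftrightarrow> r \<le> 2"
  using part_Min_k[OF p1] by (auto simp: Vmem)
lemma Min2: "B \<in> P2 \<Longrightarrow> (r, Min B) \<in> V \<longleftrightarrow> r \<le> 2"
  using part_Min_k[OF p2] by (auto simp: Vmem)

definition Lp where "Lp = {C \<in> comps. C \<subseteq> row 1 k}"

lemma loop_sub1: "Lp \<subseteq> (\<lambda>B. cls (1, Min B)) ` (P1 - T1)"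
proof
  fix C assume "C \<in> Lp"
  then have C: "C \<in> comps" "C \<subseteq> row 1 k" by (auto simp: Lp_def)
  obtain u where u: "u \<in> C" using comp_ne[OF C(1)] by blast
  then obtain i where ui: "u = (1,i)" "i \<in> {1..k}" using C(2) by (cases u) auto
  obtain B where B: "B \<in> P1" "i \<in> B" using part_ex[OF p1 ui(2)] by blast
  have nt: "B \<notin> T1"
  proof
    assume "B \<in> T1"
    then have "((1,i),(0,i)) \<in> R" using B by (auto simp: R_iff)
    then have "(0,i) \<in> C" using comp_closed[OF C(1)] u ui by blast
    then show False using C(2) by auto
  qed
  have "((1,i),(1,Min B)) \<in> R" using B part_Min[OF p1 B(1)] by (auto simp: R_iff)
  then have "(1,Min B) \<in> C" using comp_closed[OF C(1)] u ui by blast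
  then have "C = cls (1, Min B)" by (rule C_eq[OF C(1)])
  then show "C \<in> (\<lambda>B. cls (1, Min B)) ` (P1 - T1)" using B nt by blast
qed

lemma loop_sub2: "Lp \<subseteq> (\<lambda>B. cls (1, Min B)) ` (P2 - T2)"
proof
  fix C assume "C \<in> Lp"
  then have C: "C \<in> comps" "C \<subseteq> row 1 k" by (auto simp: Lp_def)
  obtain u where u: "u \<in> C" using comp_ne[OF C(1)] by blast
  then obtain i where ui: "u = (1,i)" "i \<in> {1..k}" using C(2) by (cases u) auto
  obtain B where B: "B \<in> P2" "i \<in> B" using part_ex[OF p2 ui(2)] by blast
  have nt: "B \<notin> T2"
  proof
    assume "B \<in> T2"
    then have "((1,i),(2,i)) \<in> R" using B by (auto simp: R_iff)
    then have "(2,i) \<in> C" using comp_closed[OF C(1)] u ui by blast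
    then show False using C(2) by auto
  qed
  have "((1,i),(1,Min B)) \<in> R" using B part_Min[OF p2 B(1)] by (auto simp: R_iff)
  then have "(1,Min B) \<in> C" using comp_closed[OF C(1)] u ui by blast
  then have "C = cls (1, Min B)" by (rule C_eq[OF C(1)])
  then show "C \<in> (\<lambda>B. cls (1, Min B)) ` (P2 - T2)" using B nt by blast
qed

lemma img_card:
  assumes "finite N" "L \<subseteq> f ` N" "card L = card N"
  shows "L = f ` N" "inj_on f N"
proof -
  have "card (f ` N) \<le> card N" using assms(1) by (rule card_image_le)
  moreover have "card L \<le> card (f ` N)" using assms(1,2) by (intro card_mono) auto
  ultimately have e: "card (f ` N) = card N" using assms(3) by linarith
  show "L = f ` N" using assms e by (intro card_subset_eq) auto
  show "inj_on f N" using assms(1) e by (rule eq_card_imp_inj_on)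
qed

lemma loop_eq:
  assumes c1: "card Lp = card (P1 - T1)" and c2: "card Lp = card (P2 - T2)"
  shows "P1 - T1 = P2 - T2"
proof -
  define f where "f B = cls (1, Min B)" for B
  have fn1: "finite (P1 - T1)" "finite (P2 - T2)" using fin1 fin2 by auto
  have L1: "Lp = f ` (P1 - T1)" and inj1: "inj_on f (P1 - T1)"
    using img_card[OF fn1(1) loop_sub1 c1] unfolding f_def by auto
  have L2: "Lp = f ` (P2 - T2)" and inj2: "inj_on f (P2 - T2)"
    using img_card[OF fn1(2) loop_sub2 c2] unfolding f_def by auto
  have key: "B \<in> P2 - T2" if B: "B \<in> P1 - T1" for B
  proof -
    define b where "b = Min B"
    have b: "b \<in> B" "b \<in> {1..k}" using part_Min[OF p1] part_Min_k[OF p1] B unfolding b_def by auto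
    have fB: "f B \<in> comps" "f B \<subseteq> row 1 k" using B L1 unfolding Lp_def by auto
    have bfB: "(1,b) \<in> f B" unfolding f_def b_def by (rule cls_self) (use Min1 B in auto)
    have G2: "B'' \<in> P2 - T2 \<and> f B'' = f B" if "(1,i) \<in> f B" "B'' \<in> P2" "i \<in> B''" for i B''
    proof -
      have "B'' \<notin> T2"
      proof
        assume "B'' \<in> T2"
        then have "((1,i),(2,i)) \<in> R" using that by (auto simp: R_iff)
        then have "(2,i) \<in> f B" using comp_closed[OF fB(1)] that by blast
        then show False using fB(2) by auto
      qed
      moreover have "((1,i),(1,Min B'')) \<in> R" using that part_Min[OF p2 that(2)] by (auto simp: R_iff)
      then have "(1,Min B'') \<in> f B" using comp_closed[OF fB(1)] that by blast
      then have "f B = f B''" unfolding f_def[of B''] by (rule C_eq[OF fB(1)])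
      ultimately show ?thesis using that by auto
    qed
    have G1: "B' \<in> P1 - T1 \<and> f B' = f B" if "(1,i) \<in> f B" "B' \<in> P1" "i \<in> B'" for i B'
    proof -
      have "B' \<notin> T1"
      proof
        assume "B' \<in> T1"
        then have "((1,i),(0,i)) \<in> R" using that by (auto simp: R_iff)
        then have "(0,i) \<in> f B" using comp_closed[OF fB(1)] that by blast
        then show False using fB(2) by auto
      qed
      moreover have "((1,i),(1,Min B')) \<in> R" using that part_Min[OF p1 that(2)] by (auto simp: R_iff)
      then have "(1,Min B') \<in> f B" using comp_closed[OF fB(1)] that by blast
      then have "f B = f B'" unfolding f_def[of B'] by (rule C_eq[OF fB(1)])
      ultimately show ?thesis using that by auto
    qed
    obtain B2 where B2: "B2 \<in> P2" "b \<in> B2" using part_ex[OF p2 b(2)] by blast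
    have B2' : "B2 \<in> P2 - T2" "f B2 = f B" using G2[OF bfB B2] by auto
    have "B \<subseteq> B2"
    proof
      fix i assume i: "i \<in> B"
      have "((1,b),(1,i)) \<in> R" using B b i by (auto simp: R_iff)
      then have fi: "(1,i) \<in> f B" using comp_closed[OF fB(1) bfB] by blast
      have ik: "i \<in> {1..k}" using mem1 B i by auto
      obtain B'' where B'': "B'' \<in> P2" "i \<in> B''" using part_ex[OF p2 ik] by blast
      have "B'' \<in> P2 - T2" "f B'' = f B2" using G2[OF fi B''] B2' by auto
      then have "B'' = B2" using inj2 B2' unfolding inj_on_def by blast
      then show "i \<in> B2" using B'' by simp
    qed
    moreover have "B2 \<subseteq> B"
    proof
      fix i assume i: "i \<in> B2"
      have "((1,b),(1,i)) \<in> R" using B2 b i by (auto simp: R_iff)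
      then have fi: "(1,i) \<in> f B" using comp_closed[OF fB(1) bfB] by blast
      have ik: "i \<in> {1..k}" using mem2 B2 i by auto
      obtain B' where B': "B' \<in> P1" "i \<in> B'" using part_ex[OF p1 ik] by blast
      have "B' \<in> P1 - T1" "f B' = f B" using G1[OF fi B'] by auto
      then have "B' = B" using inj1 B unfolding inj_on_def by blast
      then show "i \<in> B" using B' by simp
    qed
    ultimately show ?thesis using B2' by simp
  qed
  have "P1 - T1 \<subseteq> P2 - T2" using key by blast
  moreover have "card (P1 - T1) = card (P2 - T2)" using c1 c2 by simp
  ultimately show ?thesis using fn1 by (intro card_subset_eq) auto
qed

definition TC where "TC = {C \<in> comps. C \<inter> row 0 k \<noteq> {} \<and> C \<inter> row 2 k \<noteq> {}}"

lemma tc_sub1: "TC \<subseteq> (\<lambda>B. cls (0, Min B)) ` T1"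
proof
  fix C assume "C \<in> TC"
  then have C: "C \<in> comps" "C \<inter> row 0 k \<noteq> {}" "C \<inter> row 2 k \<noteq> {}" by (auto simp: TC_def)
  from C obtain x where x: "x \<in> C" "x \<in> row 0 k" by blast
  then obtain i where u: "(0,i) \<in> C" and ik: "i \<in> {1..k}" by (cases x) auto
  obtain B where B: "B \<in> P1" "i \<in> B" using part_ex[OF p1 ik] by blast
  have inT: "B \<in> T1"
  proof (rule ccontr)
    assume nt: "B \<notin> T1"
    have cl: "v \<in> Pair 0 ` B" if uv: "(u', v) \<in> R" and uX: "u' \<in> Pair 0 ` B" for u' v
    proof -
      obtain j where j: "u' = (0,j)" "j \<in> B" using uX by auto
      obtain r' j' where v: "v = (r',j')" by (cases v)
      from uv[unfolded j v R_iff] obtain B' where B': "B' \<in> P1" "j \<in> B'" "j' \<in> B'" "0 = r' \<or> B' \<in> T1"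
        by auto
      have "B' = B" using part_uniq[OF p1 B'(1) B(1) B'(2) j(2)] .
      then show ?thesis using B' nt v by auto
    qed
    have "C \<subseteq> Pair 0 ` B" by (rule closed_sub[OF cl C(1) u]) (use B in auto)
    then show False using C(3) by auto
  qed
  have "((0,i),(0,Min B)) \<in> R" using B part_Min[OF p1 B(1)] by (auto simp: R_iff)
  then have "(0,Min B) \<in> C" using comp_closed[OF C(1)] u by blast
  then have "C = cls (0, Min B)" by (rule C_eq[OF C(1)])
  then show "C \<in> (\<lambda>B. cls (0, Min B)) ` T1" using inT by blast
qed

lemma tc_sub2: "TC \<subseteq> (\<lambda>B. cls (2, Min B)) ` T2"
proof
  fix C assume "C \<in> TC"
  then have C: "C \<in> comps" "C \<inter> row 0 k \<noteq> {}" "C \<inter> row 2 k \<noteq> {}" by (auto simp: TC_def)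
  from C obtain x where x: "x \<in> C" "x \<in> row 2 k" by blast
  then obtain i where u: "(2,i) \<in> C" and ik: "i \<in> {1..k}" by (cases x) auto
  obtain B where B: "B \<in> P2" "i \<in> B" using part_ex[OF p2 ik] by blast
  have inT: "B \<in> T2"
  proof (rule ccontr)
    assume nt: "B \<notin> T2"
    have cl: "v \<in> Pair 2 ` B" if uv: "(u', v) \<in> R" and uX: "u' \<in> Pair 2 ` B" for u' v
    proof -
      obtain j where j: "u' = (2,j)" "j \<in> B" using uX by auto
      obtain r' j' where v: "v = (r',j')" by (cases v)
      from uv[unfolded j v R_iff] obtain B' where B': "B' \<in> P2" "j \<in> B'" "j' \<in> B'" "2 = r' \<or> B' \<in> T2"
        by auto
      have "B' = B" using part_uniq[OF p2 B'(1) B(1) B'(2) j(2)] .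
      then show ?thesis using B' nt v by auto
    qed
    have "C \<subseteq> Pair 2 ` B" by (rule closed_sub[OF cl C(1) u]) (use B in auto)
    then show False using C(2) by auto
  qed
  have "((2,i),(2,Min B)) \<in> R" using B part_Min[OF p2 B(1)] by (auto simp: R_iff)
  then have "(2,Min B) \<in> C" using comp_closed[OF C(1)] u by blast
  then have "C = cls (2, Min B)" by (rule C_eq[OF C(1)])
  then show "C \<in> (\<lambda>B. cls (2, Min B)) ` T2" using inT by blast
qed

lemma T_eq:
  assumes N: "P1 - T1 = P2 - T2" and c1: "card TC = card T1" and c2: "card TC = card T2"
  shows "T1 = T2"
proof -
  define g where "g B = cls (0, Min B)" for B
  define h where "h B = cls (2, Min B)" for B
  have fT: "finite T1" "finite T2" using fin1 fin2 t1 t2 finite_subset by auto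
  have inj1: "inj_on g T1" using img_card[OF fT(1) tc_sub1 c1] unfolding g_def by auto
  have inj2: "inj_on h T2" using img_card[OF fT(2) tc_sub2 c2] unfolding h_def by auto
  have TT: "B' \<in> T1 \<longleftrightarrow> B'' \<in> T2" if "B' \<in> P1" "B'' \<in> P2" "i \<in> B'" "i \<in> B''" for B' B'' i
  proof
    assume "B' \<in> T1"
    show "B'' \<in> T2"
    proof (rule ccontr)
      assume "B'' \<notin> T2"
      then have "B'' \<in> P1 - T1" using N that by auto
      then have "B'' = B'" using part_uniq[OF p1 _ that(1)] that by auto
      then show False using \<open>B' \<in> T1\<close> \<open>B'' \<in> P1 - T1\<close> by auto
    qed
  next
    assume "B'' \<in> T2"
    show "B' \<in> T1"
    proof (rule ccontr)
      assume "B' \<notin> T1"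
      then have "B' \<in> P2 - T2" using N that by auto
      then have "B'' = B'" using part_uniq[OF p2 _ that(2)] that by auto
      then show False using \<open>B'' \<in> T2\<close> \<open>B' \<in> P2 - T2\<close> by auto
    qed
  qed
  have key: "B \<in> T2" if B: "B \<in> T1" for B
  proof -
    define b where "b = Min B"
    have BP: "B \<in> P1" using B t1 by auto
    have b: "b \<in> B" "b \<in> {1..k}" using part_Min[OF p1 BP] part_Min_k[OF p1 BP] unfolding b_def by auto
    obtain B2 where B2: "B2 \<in> P2" "b \<in> B2" using part_ex[OF p2 b(2)] by blast
    have B2T: "B2 \<in> T2" using TT[OF BP B2(1) b(1) B2(2)] B by simp
    have gB: "g B \<in> comps" "(0,b) \<in> g B" unfolding g_def b_def
      using cls_comps cls_self Min1[OF BP] by auto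
    have m2: "Min B2 \<in> B2" "Min B2 \<in> {1..k}" using part_Min[OF p2 B2(1)] part_Min_k[OF p2 B2(1)] by auto
    have hB: "h B2 \<in> comps" "(2,Min B2) \<in> h B2" unfolding h_def
      using cls_comps cls_self Min2[OF B2(1)] by auto
    have "B2 \<subseteq> B"
    proof
      fix i assume i: "i \<in> B2"
      have ik: "i \<in> {1..k}" using mem2 B2 i by auto
      obtain B' where B': "B' \<in> P1" "i \<in> B'" using part_ex[OF p1 ik] by blast
      have B'T: "B' \<in> T1" using TT[OF B'(1) B2(1) B'(2) i] B2T by simp
      have "((0,b),(1,b)) \<in> R" using BP B b by (auto simp: R_iff)
      then have x1: "(1,b) \<in> g B" using comp_closed[OF gB(1) gB(2)] by blast
      have "((1,b),(1,i)) \<in> R" using B2 i by (auto simp: R_iff)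
      then have x2: "(1,i) \<in> g B" using comp_closed[OF gB(1) x1] by blast
      have "((1,i),(0,Min B')) \<in> R" using B' B'T part_Min[OF p1 B'(1)] by (auto simp: R_iff)
      then have "(0,Min B') \<in> g B" using comp_closed[OF gB(1) x2] by blast
      then have "g B = g B'" unfolding g_def[of B'] by (rule C_eq[OF gB(1)])
      then have "B' = B" using inj1 B B'T unfolding inj_on_def by metis
      then show "i \<in> B" using B' by simp
    qed
    moreover have "B \<subseteq> B2"
    proof
      fix i assume i: "i \<in> B"
      have ik: "i \<in> {1..k}" using mem1 BP i by auto
      obtain B'' where B'': "B'' \<in> P2" "i \<in> B''" using part_ex[OF p2 ik] by blast
      have B''T: "B'' \<in> T2" using TT[OF BP B''(1) i B''(2)] B by simp
      have "((2,Min B2),(1,b)) \<in> R" using B2 B2T m2 by (auto simp: R_iff)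
      then have x1: "(1,b) \<in> h B2" using comp_closed[OF hB(1) hB(2)] by blast
      have "((1,b),(1,i)) \<in> R" using BP b i by (auto simp: R_iff)
      then have x2: "(1,i) \<in> h B2" using comp_closed[OF hB(1) x1] by blast
      have "((1,i),(2,Min B'')) \<in> R" using B'' B''T part_Min[OF p2 B''(1)] by (auto simp: R_iff)
      then have "(2,Min B'') \<in> h B2" using comp_closed[OF hB(1) x2] by blast
      then have "h B2 = h B''" unfolding h_def[of B''] by (rule C_eq[OF hB(1)])
      then have "B'' = B2" using inj2 B2T B''T unfolding inj_on_def by metis
      then show "i \<in> B2" using B'' by simp
    qed
    ultimately show ?thesis using B2T by simp
  qed
  have "T1 \<subseteq> T2" using key by blast
  moreover have "card T1 = card T2" using c1 c2 by simp
  ultimately show ?thesis using fT by (intro card_subset_eq) auto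
qed

lemma diag_case:
  assumes E: "P1 = P2" "T1 = T2"
  shows "card Lp = card (P1 - T1)" "card TC = card T1"
proof -
  define f where "f B = cls (1, Min B)" for B
  define g where "g B = cls (0, Min B)" for B
  have fT: "finite (P1 - T1)" "finite T1" using fin1 t1 finite_subset by auto
  have cl1: "C \<subseteq> Pair 1 ` B" if B: "B \<in> P1 - T1" and C: "C \<in> comps" "(1,i) \<in> C" "i \<in> B" for B C i
  proof (rule closed_sub[OF _ C(1,2)])
    show "(1,i) \<in> Pair 1 ` B" using C by auto
    fix u v assume uv: "(u,v) \<in> R" and uX: "u \<in> Pair 1 ` B"
    obtain j where j: "u = (1,j)" "j \<in> B" using uX by auto
    obtain r' j' where v: "v = (r',j')" by (cases v)
    from uv[unfolded j v R_iff] obtain B' where B': "B' \<in> P1" "j \<in> B'" "j' \<in> B'" "1 = r' \<or> B' \<in> T1"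
      using E by auto
    have "B' = B" using part_uniq[OF p1 B'(1) _ B'(2) j(2)] B by auto
    then show "v \<in> Pair 1 ` B" using B' B v by auto
  qed
  have fL: "f B \<in> Lp" if B: "B \<in> P1 - T1" for B
  proof -
    have m: "Min B \<in> B" using part_Min[OF p1] B by auto
    have fc: "f B \<in> comps" "(1, Min B) \<in> f B" unfolding f_def using cls_comps cls_self Min1 B by auto
    have "f B \<subseteq> Pair 1 ` B" using cl1[OF B fc m] .
    then have "f B \<subseteq> row 1 k" using mem1 B by auto
    then show ?thesis using fc unfolding Lp_def by auto
  qed
  have finj: "inj_on f (P1 - T1)"
  proof (rule inj_onI)
    fix B B' assume B: "B \<in> P1 - T1" and B': "B' \<in> P1 - T1" and eq: "f B = f B'"
    have m: "Min B \<in> B" "Min B' \<in> B'" using part_Min[OF p1] B B' by auto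
    have fc: "f B \<in> comps" "(1, Min B) \<in> f B" unfolding f_def using cls_comps cls_self Min1 B by auto
    have "(1, Min B') \<in> f B" unfolding eq unfolding f_def using cls_self Min1 B' by auto
    then have "Min B' \<in> B" using cl1[OF B fc m(1)] by auto
    then show "B = B'" using part_uniq[OF p1 _ _ m(2)] B B' by auto
  qed
  have "Lp = f ` (P1 - T1)" using loop_sub1 fL unfolding f_def by blast
  then show "card Lp = card (P1 - T1)" using card_image[OF finj] by simp
  have cl2: "C \<subseteq> {(r,j). r \<le> (2::nat) \<and> j \<in> B}" if B: "B \<in> T1" and C: "C \<in> comps" "(0,i) \<in> C" "i \<in> B" for B C i
  proof (rule closed_sub[OF _ C(1,2)])
    show "(0,i) \<in> {(r,j). r \<le> (2::nat) \<and> j \<in> B}" using C by auto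
    fix u v assume uv: "(u,v) \<in> R" and uX: "u \<in> {(r,j). r \<le> (2::nat) \<and> j \<in> B}"
    obtain r j where j: "u = (r,j)" "j \<in> B" using uX by auto
    obtain r' j' where v: "v = (r',j')" by (cases v)
    from uv[unfolded j v R_iff] obtain B' where B': "B' \<in> P1" "j \<in> B'" "j' \<in> B'" "r' \<le> 2"
      using E by auto
    have "B' = B" using part_uniq[OF p1 B'(1) _ B'(2) j(2)] B t1 by auto
    then show "v \<in> {(r,j). r \<le> (2::nat) \<and> j \<in> B}" using B' v by auto
  qed
  have gT: "g B \<in> TC" if B: "B \<in> T1" for B
  proof -
    have BP: "B \<in> P1" using B t1 by auto
    have m: "Min B \<in> B" "Min B \<in> {1..k}" using part_Min[OF p1 BP] part_Min_k[OF p1 BP] by auto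
    have gc: "g B \<in> comps" "(0, Min B) \<in> g B" unfolding g_def using cls_comps cls_self Min1 BP by auto
    have "((0,Min B),(2,Min B)) \<in> R\<^sup>+"
    proof (rule trancl_into_trancl2)
      show "((0,Min B),(1,Min B)) \<in> R" using BP B m by (auto simp: R_iff)
      have BP2: "B \<in> P2" "B \<in> T2" using BP B E by auto
      have "((1,Min B),(2,Min B)) \<in> R" unfolding R_iff using BP2 m(1) by auto
      then show "((1,Min B),(2,Min B)) \<in> R\<^sup>+" by (rule r_into_trancl)
    qed
    then have "(2,Min B) \<in> g B" unfolding g_def cls_def by auto
    then have "(2,Min B) \<in> g B \<inter> row 2 k" using m by simp
    moreover have "(0,Min B) \<in> g B \<inter> row 0 k" using gc m by simp
    ultimately show ?thesis using gc(1) unfolding TC_def by blast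
  qed
  have ginj: "inj_on g T1"
  proof (rule inj_onI)
    fix B B' assume B: "B \<in> T1" and B': "B' \<in> T1" and eq: "g B = g B'"
    have BP: "B \<in> P1" "B' \<in> P1" using B B' t1 by auto
    have m: "Min B \<in> B" "Min B' \<in> B'" using part_Min[OF p1] BP by auto
    have fc: "g B \<in> comps" "(0, Min B) \<in> g B" unfolding g_def using cls_comps cls_self Min1 BP by auto
    have "(0, Min B') \<in> g B" unfolding eq unfolding g_def using cls_self Min1 BP by auto
    then have "Min B' \<in> B" using cl2[OF B fc m(1)] by auto
    then show "B = B'" using part_uniq[OF p1 _ _ m(2)] BP by auto
  qed
  have "TC = g ` T1" using tc_sub1 gT unfolding g_def by blast
  then show "card TC = card T1" using card_image[OF ginj] by simp
qed

lemma sc: "stack_comps k (diag_of (P1,T1)) (diag_of (P2,T2)) = comps"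
  unfolding stack_comps_def comps_def V_def R_def by simp

lemma loops_eq: "loops k (diag_of (P1,T1)) (diag_of (P2,T2)) = card Lp"
  unfolding loops_def sc Lp_def ..

lemma lift_rows:
  assumes "C \<subseteq> V"
  shows "(lift_up ` (C - row 1 k) \<inter> row 0 k \<noteq> {} \<longleftrightarrow> C \<inter> row 0 k \<noteq> {})"
    "(lift_up ` (C - row 1 k) \<inter> row 1 k \<noteq> {} \<longleftrightarrow> C \<inter> row 2 k \<noteq> {})"
proof -
  have l0: "lift_up x \<in> row 0 k \<longleftrightarrow> x \<in> row 0 k" if "x \<in> C" for x
    using that assms by (cases x) (auto simp: lift_up_def Vmem)
  have l1: "lift_up x \<in> row 1 k \<longleftrightarrow> x \<in> row 2 k" if "x \<in> C" "x \<notin> row 1 k" for x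
    using that assms by (cases x) (auto simp: lift_up_def Vmem)
  show "(lift_up ` (C - row 1 k) \<inter> row 0 k \<noteq> {} \<longleftrightarrow> C \<inter> row 0 k \<noteq> {})"
  proof
    assume "lift_up ` (C - row 1 k) \<inter> row 0 k \<noteq> {}"
    then obtain x where "x \<in> C" "x \<notin> row 1 k" "lift_up x \<in> row 0 k" by blast
    then show "C \<inter> row 0 k \<noteq> {}" using l0 by blast
  next
    assume "C \<inter> row 0 k \<noteq> {}"
    then obtain x where x: "x \<in> C" "x \<in> row 0 k" by blast
    then have "x \<notin> row 1 k" by (cases x) auto
    then show "lift_up ` (C - row 1 k) \<inter> row 0 k \<noteq> {}" using x l0 by blast
  qed
  show "(lift_up ` (C - row 1 k) \<inter> row 1 k \<noteq> {} \<longleftrightarrow> C \<inter> row 2 k \<noteq> {})"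
  proof
    assume "lift_up ` (C - row 1 k) \<inter> row 1 k \<noteq> {}"
    then obtain x where "x \<in> C" "x \<notin> row 1 k" "lift_up x \<in> row 1 k" by blast
    then show "C \<inter> row 2 k \<noteq> {}" using l1 by blast
  next
    assume "C \<inter> row 2 k \<noteq> {}"
    then obtain x where x: "x \<in> C" "x \<in> row 2 k" by blast
    then have "x \<notin> row 1 k" by (cases x) auto
    then show "lift_up ` (C - row 1 k) \<inter> row 1 k \<noteq> {}" using x l1 by blast
  qed
qed

lemma prop_eq: "prop_num k (diag_prod k (diag_of (P1,T1)) (diag_of (P2,T2))) = card TC"
proof -
  define \<phi> where "\<phi> C = lift_up ` (C - row 1 k)" for C
  have set: "{B \<in> diag_prod k (diag_of (P1,T1)) (diag_of (P2,T2)). B \<inter> row 0 k \<noteq> {} \<and> B \<inter> row 1 k \<noteq> {}}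
      = \<phi> ` TC"
  proof (rule set_eqI)
    fix B
    show "B \<in> {B \<in> diag_prod k (diag_of (P1,T1)) (diag_of (P2,T2)). B \<inter> row 0 k \<noteq> {} \<and> B \<inter> row 1 k \<noteq> {}}
      \<longleftrightarrow> B \<in> \<phi> ` TC"
    proof
      assume "B \<in> {B \<in> diag_prod k (diag_of (P1,T1)) (diag_of (P2,T2)). B \<inter> row 0 k \<noteq> {} \<and> B \<inter> row 1 k \<noteq> {}}"
      then obtain C where C: "C \<in> comps" "B = \<phi> C" "B \<inter> row 0 k \<noteq> {}" "B \<inter> row 1 k \<noteq> {}"
        unfolding diag_prod_def sc \<phi>_def by blast
      then have "C \<in> TC" using lift_rows[OF comp_sub[OF C(1)]] unfolding TC_def \<phi>_def by auto
      then show "B \<in> \<phi> ` TC" using C by blast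
    next
      assume "B \<in> \<phi> ` TC"
      then obtain C where C: "C \<in> TC" "B = \<phi> C" by blast
      then have Cc: "C \<in> comps" "C \<inter> row 0 k \<noteq> {}" "C \<inter> row 2 k \<noteq> {}" unfolding TC_def by auto
      have "\<not> C \<subseteq> row 1 k"
      proof
        assume "C \<subseteq> row 1 k"
        then have "C \<inter> row 0 k = {}" by auto
        then show False using Cc by simp
      qed
      then have "B \<in> diag_prod k (diag_of (P1,T1)) (diag_of (P2,T2))"
        unfolding diag_prod_def sc using C(2) Cc(1) unfolding \<phi>_def by blast
      moreover have "B \<inter> row 0 k \<noteq> {} \<and> B \<inter> row 1 k \<noteq> {}"
        using lift_rows[OF comp_sub[OF Cc(1)]] Cc C(2) unfolding \<phi>_def by auto
      ultimately show "B \<in> {B \<in> diag_prod k (diag_of (P1,T1)) (diag_of (P2,T2)). B \<inter> row 0 k \<noteq> {} \<and> B \<inter> row 1 k \<noteq> {}}"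
        by blast
    qed
  qed
  have linj: "inj_on lift_up (V - row 1 k)"
  proof (rule inj_onI)
    fix x y assume "x \<in> V - row 1 k" "y \<in> V - row 1 k" "lift_up x = lift_up y"
    then show "x = y" by (cases x; cases y) (auto simp: lift_up_def Vmem split: if_splits)
  qed
  have inj: "inj_on \<phi> TC"
  proof (rule inj_onI)
    fix C C' assume C: "C \<in> TC" and C': "C' \<in> TC" and eq: "\<phi> C = \<phi> C'"
    have Cc: "C \<in> comps" "C' \<in> comps" "C \<inter> row 0 k \<noteq> {}" using C C' unfolding TC_def by auto
    have "C - row 1 k \<subseteq> V - row 1 k" "C' - row 1 k \<subseteq> V - row 1 k" using comp_sub Cc by auto
    then have e: "C - row 1 k = C' - row 1 k" using eq unfolding \<phi>_def
      using inj_on_image_eq_iff[OF linj] by blast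
    obtain x where x: "x \<in> C" "x \<in> row 0 k" using Cc(3) by blast
    then have "x \<notin> row 1 k" by (cases x) auto
    then have "x \<in> C'" using e x by blast
    then show "C = C'" using C_eq[OF Cc(1) x(1)] C_eq[OF Cc(2)] by simp
  qed
  show ?thesis unfolding prop_num_def set using card_image[OF inj] by simp
qed

end

lemma J_fin: "finite (J_set k s)"
proof -
  have "J_set k s \<subseteq> Pow (Pow {1..k}) \<times> Pow (Pow {1..k})"
    unfolding J_set_def partition_on_def by auto
  then show ?thesis by (rule finite_subset) simp
qed

lemma gram_diag:
  assumes "D \<in> J_set k s"
  shows "gram k s D D = [:0,1:] ^ card (fst D - snd D)"
proof -
  obtain P T where D: "D = (P,T)" "partition_on {1..k} P" "T \<subseteq> P" "card T = s"
    using assms unfolding J_set_def by auto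
  interpret twoD k P T P T using D by unfold_locales auto
  have "prop_num k (diag_prod k (diag_of D) (diag_of D)) = s"
    using prop_eq diag_case(2) D by simp
  moreover have "loops k (diag_of D) (diag_of D) = card (P - T)"
    using loops_eq diag_case(1) D by simp
  ultimately show ?thesis unfolding gram_def D(1) by simp
qed

lemma gram_off:
  assumes D: "D \<in> J_set k s" and E: "E \<in> J_set k s" and ne: "D \<noteq> E" and nz: "gram k s D E \<noteq> 0"
  shows "\<exists>l. gram k s D E = [:0,1:] ^ l \<and> 2 * l < card (fst D - snd D) + card (fst E - snd E)"
proof -
  obtain P1 T1 where D': "D = (P1,T1)" "partition_on {1..k} P1" "T1 \<subseteq> P1" "card T1 = s"
    using D unfolding J_set_def by auto
  obtain P2 T2 where E': "E = (P2,T2)" "partition_on {1..k} P2" "T2 \<subseteq> P2" "card T2 = s"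
    using E unfolding J_set_def by auto
  interpret twoD k P1 T1 P2 T2 using D' E' by unfold_locales auto
  have ps: "card TC = s" using nz prop_eq unfolding gram_def D'(1) E'(1) by (auto split: if_splits)
  have g: "gram k s D E = [:0,1:] ^ card Lp" using ps prop_eq loops_eq unfolding gram_def D'(1) E'(1) by simp
  have fn: "finite (P1 - T1)" "finite (P2 - T2)" using fin1 fin2 by auto
  have le1: "card Lp \<le> card (P1 - T1)"
    using card_mono[OF finite_imageI[OF fn(1)] loop_sub1] card_image_le[OF fn(1), of "\<lambda>B. cls (1, Min B)"] by linarith
  have le2: "card Lp \<le> card (P2 - T2)"
    using card_mono[OF finite_imageI[OF fn(2)] loop_sub2] card_image_le[OF fn(2), of "\<lambda>B. cls (1, Min B)"] by linarith
  have "2 * card Lp < card (P1 - T1) + card (P2 - T2)"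
  proof (rule ccontr)
    assume "\<not> ?thesis"
    then have c1: "card Lp = card (P1 - T1)" and c2: "card Lp = card (P2 - T2)" using le1 le2 by linarith+
    have N: "P1 - T1 = P2 - T2" using loop_eq[OF c1 c2] .
    have T: "T1 = T2" using T_eq[OF N] ps D'(4) E'(4) by simp
    have "P1 = (P1 - T1) \<union> T1" "P2 = (P2 - T2) \<union> T2" using D'(3) E'(3) by auto
    then have "P1 = P2" using N T by (metis (no_types))
    then show False using ne D'(1) E'(1) T by simp
  qed
  then show ?thesis using g D'(1) E'(1) by auto
qed

theorem lemma3p9:
  fixes k s :: nat
  assumes "1 \<le> k" and "s \<le> k"
  shows "gram_det k s \<noteq> 0 \<and> lead_coeff (gram_det k s) = 1"
  unfolding gram_det_def
  by (rule det_lead[OF J_fin, where M = "gram k s" and w = "\<lambda>D. card (fst D - snd D)"])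
    (auto intro: gram_diag gram_off)

end
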